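(* Let $W(x_1,\dots,x_n)$ be an invertible, non-degenerate, quasi-homogeneous polynomial with $2\sum_jw_j=d$ and $W^\star$ its transpose. For every group $G$ with $J_W^2\in G\subseteq\operatorname{SL}_W$ we have $J_{W^\star}^2\in G^\star\subseteq\operatorname{SL}_{W^\star}$. Furthermore $(G^\star)^\star=G$, $\langle J_W^2\rangle^\star=\operatorname{SL}_{W^\star}$, $(\operatorname{SL}_W)^\star=\langle J_{W^\star}^2\rangle$, and if $H_1\subseteq H_2$ are groups with $J_W^2\in H_i\subseteq\operatorname{SL}_W$, then $H_2^\star\subseteq H_1^\star$.
   Context: Invertible: $W=\sum_i\prod_jx_j^{m_{i,j}}$ with invertible exponent matrix $M$, inverse $(m^{i,j})$; quasi-homogeneous of weights $w_j$ and degree $d$; non-degenerate: only critical point $0$. $W^\star=\sum_i\prod_jx_j^{m_{j,i}}$. $\operatorname{Aut}_W$ is the finite group of diagonal symmetries of $W$, $\operatorname{SL}_W=\operatorname{Aut}_W\cap\operatorname{SL}(n;\mathbb C)$, $J_W=(e^{2\pi iw_1/d},\dots,e^{2\pi iw_n/d})$ (similarly for $W^\star$); $\langle h\rangle$ is the group generated by $h$, and $G[J_W]$ the group generated by $G$ and $J_W$. With $\bar\rho_k=(e^{2\pi im^{k,1}},\dots,e^{2\pi im^{k,n}})\in\operatorname{Aut}_{W^\star}$, the Berglund--Hübsch dual of $H\subseteq\operatorname{Aut}_W$ is $H^{\mathrm T}=\{\prod_k\bar\rho_k^{r_k}:\prod_kx_k^{r_k}\text{ is }H\text{-invariant}\}$,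 i.e. the kernel of the Cartier dual $\operatorname{Aut}_{W^\star}=\widehat{\operatorname{Aut}_W}\to\widehat H$ of the inclusion. For $J_W^2\in G\subseteq\operatorname{SL}_W$ set $G^\star:=(G[J_W])^{\mathrm T}$; symmetrically for groups of $W^\star$, with $(W^\star)^\star=W$. *)

theory Defs
  imports "HOL-Analysis.Analysis"
begin

text \<open>An invertible polynomial W = sum_i prod_j x_j^(M i j) is encoded by its square
 exponent matrix M, indexed by a finite type 'n (rows = monomials, columns = variables).
 Diagonal symmetries are vectors 'n \<Rightarrow> complex acting by x_j \<mapsto> g_j x_j.\<close>

definition Wpoly :: "('n::finite \<Rightarrow> 'n \<Rightarrow> nat) \<Rightarrow> ('n \<Rightarrow> complex) \<Rightarrow> complex" where
  "Wpoly M x = (\<Sum>i\<in>UNIV. \<Prod>j\<in>UNIV. x j ^ M i j)"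

text \<open>Transpose polynomial W^star has exponent matrix the transpose of M.\<close>
definition Mtr :: "('n::finite \<Rightarrow> 'n \<Rightarrow> nat) \<Rightarrow> ('n \<Rightarrow> 'n \<Rightarrow> nat)" where
  "Mtr M = (\<lambda>i j. M j i)"

definition matR :: "('n::finite \<Rightarrow> 'n \<Rightarrow> nat) \<Rightarrow> real^'n^'n" where
  "matR M = (\<chi> i j. real (M i j))"

definition invertible_poly :: "('n::finite \<Rightarrow> 'n \<Rightarrow> nat) \<Rightarrow> bool" where
  "invertible_poly M \<longleftrightarrow> invertible (matR M)"

definition minv :: "('n::finite \<Rightarrow> 'n \<Rightarrow> nat) \<Rightarrow> 'n \<Rightarrow> 'n \<Rightarrow> real" where
  "minv M i j = matrix_inv (matR M) $ i $ j"

definition quasi_hom :: "('n::finite \<Rightarrow> 'n \<Rightarrow> nat) \<Rightarrow> ('n \<Rightarrow> nat) \<Rightarrow> nat \<Rightarrow> bool" where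
  "quasi_hom M w d \<longleftrightarrow> d > 0 \<and> (\<forall>j. w j > 0) \<and> (\<forall>i. (\<Sum>j\<in>UNIV. M i j * w j) = d)"

definition dW :: "('n::finite \<Rightarrow> 'n \<Rightarrow> nat) \<Rightarrow> 'n \<Rightarrow> ('n \<Rightarrow> complex) \<Rightarrow> complex" where
  "dW M k x = deriv (\<lambda>z. Wpoly M (x(k := z))) (x k)"

definition nondegenerate :: "('n::finite \<Rightarrow> 'n \<Rightarrow> nat) \<Rightarrow> bool" where
  "nondegenerate M \<longleftrightarrow> (\<forall>x. (\<forall>k. dW M k x = 0) \<longrightarrow> x = (\<lambda>_. 0))"

text \<open>Normalised weights q_j = w_j/d (unique by invertibility) and the exponential
 grading element J_W = (exp(2 pi i w_j/d))_j.\<close>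
definition qweight :: "('n::finite \<Rightarrow> 'n \<Rightarrow> nat) \<Rightarrow> 'n \<Rightarrow> real" where
  "qweight M = (THE q. \<forall>i. (\<Sum>j\<in>UNIV. real (M i j) * q j) = 1)"

definition Jgrad :: "('n::finite \<Rightarrow> 'n \<Rightarrow> nat) \<Rightarrow> 'n \<Rightarrow> complex" where
  "Jgrad M = (\<lambda>j. cis (2 * pi * qweight M j))"

definition sq :: "('n \<Rightarrow> complex) \<Rightarrow> 'n \<Rightarrow> complex" where
  "sq g = (\<lambda>j. g j ^ 2)"

definition Aut :: "('n::finite \<Rightarrow> 'n \<Rightarrow> nat) \<Rightarrow> ('n \<Rightarrow> complex) set" where
  "Aut M = {g. (\<forall>j. g j \<noteq> 0) \<and> (\<forall>x. Wpoly M (\<lambda>j. g j * x j) = Wpoly M x)}"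

definition SL :: "('n::finite \<Rightarrow> 'n \<Rightarrow> nat) \<Rightarrow> ('n \<Rightarrow> complex) set" where
  "SL M = {g \<in> Aut M. (\<Prod>j\<in>UNIV. g j) = 1}"

definition is_subgroup :: "('n \<Rightarrow> complex) set \<Rightarrow> bool" where
  "is_subgroup H \<longleftrightarrow> (\<lambda>_. 1) \<in> H \<and> (\<forall>a\<in>H. \<forall>b\<in>H. (\<lambda>j. a j * b j) \<in> H)
     \<and> (\<forall>a\<in>H. (\<lambda>j. inverse (a j)) \<in> H)"

definition genby :: "('n \<Rightarrow> complex) set \<Rightarrow> ('n \<Rightarrow> complex) set" where
  "genby S = \<Inter>{H. is_subgroup H \<and> S \<subseteq> H}"

definition rhobar :: "('n::finite \<Rightarrow> 'n \<Rightarrow> nat) \<Rightarrow> 'n \<Rightarrow> 'n \<Rightarrow> complex" where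
  "rhobar M k = (\<lambda>j. cis (2 * pi * minv M k j))"

definition BHdual :: "('n::finite \<Rightarrow> 'n \<Rightarrow> nat) \<Rightarrow> ('n \<Rightarrow> complex) set \<Rightarrow> ('n \<Rightarrow> complex) set" where
  "BHdual M H = {g. \<exists>r::'n \<Rightarrow> nat. (\<forall>h\<in>H. (\<Prod>k\<in>UNIV. h k ^ r k) = 1)
      \<and> g = (\<lambda>j. \<Prod>k\<in>UNIV. rhobar M k j ^ r k)}"

definition star :: "('n::finite \<Rightarrow> 'n \<Rightarrow> nat) \<Rightarrow> ('n \<Rightarrow> complex) set \<Rightarrow> ('n \<Rightarrow> complex) set" where
  "star M G = BHdual M (genby (insert (Jgrad M) G))"

end

theory Submission
  imports Defs
begin


definition mon :: "('n::finite \<Rightarrow> complex) \<Rightarrow> ('n \<Rightarrow> nat) \<Rightarrow> complex" where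
  "mon x e = (\<Prod>j\<in>UNIV. x j ^ e j)"
definition vmul :: "('n \<Rightarrow> complex) \<Rightarrow> ('n \<Rightarrow> complex) \<Rightarrow> 'n \<Rightarrow> complex" where
  "vmul a b = (\<lambda>j. a j * b j)"
definition Pm :: "('n::finite \<Rightarrow> 'n \<Rightarrow> nat) \<Rightarrow> ('n \<Rightarrow> nat) \<Rightarrow> 'n \<Rightarrow> complex" where
  "Pm M s = (\<lambda>j. cis (2*pi*(\<Sum>k\<in>UNIV. minv M j k * real (s k))))"
definition ann :: "('n::finite \<Rightarrow> complex) set \<Rightarrow> ('n \<Rightarrow> nat) set" where
  "ann S = {r. \<forall>h\<in>S. mon h r = 1}"

lemma mon_vmul: "mon (vmul a b) e = mon a e * mon b e"
  by (simp add: mon_def vmul_def power_mult_distrib prod.distrib)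
lemma mon_add: "mon a (\<lambda>j. e j + f j) = mon a e * mon a f"
  by (simp add: mon_def power_add prod.distrib)
lemma mon_inv: "mon (\<lambda>j. inverse (a j)) e = inverse (mon a e)"
  using prod_inversef[of "\<lambda>j. a j ^ e j" UNIV] by (simp add: mon_def power_inverse o_def)
lemma mon_one[simp]: "mon (\<lambda>_. 1) e = 1" by (simp add: mon_def)
lemma mon_zero[simp]: "mon a (\<lambda>_. 0) = 1" by (simp add: mon_def)

lemma prod_cis: "(\<Prod>j\<in>A. cis (f j)) = cis (\<Sum>j\<in>A. f j)"
  by (induction A rule: infinite_finite_induct) (auto simp: cis_mult)

lemma cis_int: "cis (2*pi*(x + of_int n)) = cis (2*pi*x)"
proof -
  have "cis (2*pi*x + 2*pi* of_int n) = cis (2*pi*x) * cis (2*pi* of_int n)"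
    by (rule cis_mult[symmetric])
  then show ?thesis by (simp add: distrib_left)
qed

lemma cis_eq_1_iff: "cis x = 1 \<longleftrightarrow> (\<exists>n::int. x = 2*pi* of_int n)"
proof
  assume "cis x = 1"
  then have "exp (\<i> * complex_of_real x) = 1" by (simp add: cis_conv_exp)
  then obtain n::int where "x = of_int (2*n) * pi" by (auto simp: exp_eq_1)
  then show "\<exists>n::int. x = 2*pi* of_int n" by (intro exI[of _ n]) simp
next
  assume "\<exists>n::int. x = 2*pi* of_int n"
  then show "cis x = 1" by auto
qed

lemma inv_facts:
  assumes "invertible_poly M"
  shows "(\<Sum>j\<in>UNIV. real (M i j) * minv M j k) = (if i = k then 1 else 0)"
    and "(\<Sum>j\<in>UNIV. minv M i j * real (M j k)) = (if i = k then 1 else 0)"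
proof -
  obtain B where "matR M ** B = mat 1 \<and> B ** matR M = mat 1"
    using assms unfolding invertible_poly_def invertible_def by blast
  then have h: "matR M ** matrix_inv (matR M) = mat 1 \<and> matrix_inv (matR M) ** matR M = mat 1"
    unfolding matrix_inv_def by (rule someI)
  from h have "(matR M ** matrix_inv (matR M)) $ i $ k = mat 1 $ i $ k" by simp
  then show "(\<Sum>j\<in>UNIV. real (M i j) * minv M j k) = (if i = k then 1 else 0)"
    by (simp add: matrix_matrix_mult_def matR_def minv_def mat_def)
  from h have "(matrix_inv (matR M) ** matR M) $ i $ k = mat 1 $ i $ k" by simp
  then show "(\<Sum>j\<in>UNIV. minv M i j * real (M j k)) = (if i = k then 1 else 0)"
    by (simp add: matrix_matrix_mult_def matR_def minv_def mat_def)
qed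

lemma sum_delta_mult: fixes f :: "'b::finite \<Rightarrow> 'a::comm_ring_1" shows "(\<Sum>i\<in>UNIV. f i * (if j = i then 1 else 0)) = (f j :: 'a::comm_ring_1)"
proof -
  have "(\<Sum>i\<in>UNIV. f i * (if j = i then 1 else 0)) = (\<Sum>i\<in>UNIV. if j = i then f i else 0)"
    by (rule sum.cong) auto
  then show ?thesis by simp
qed

lemma sum_delta_mult2: fixes f :: "'b::finite \<Rightarrow> 'a::comm_ring_1" shows "(\<Sum>i\<in>UNIV. (if j = i then 1 else 0) * f i) = (f j :: 'a::comm_ring_1)"
proof -
  have "(\<Sum>i\<in>UNIV. (if j = i then 1 else 0) * f i) = (\<Sum>i\<in>UNIV. if j = i then f i else 0)"
    by (rule sum.cong) auto
  then show ?thesis by simp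
qed

lemma solve:
  assumes "invertible_poly M" "\<And>i. (\<Sum>j\<in>UNIV. real (M i j) * x j) = y i"
  shows "x j = (\<Sum>i\<in>UNIV. minv M j i * y i)"
proof -
  have "(\<Sum>i\<in>UNIV. minv M j i * y i) = (\<Sum>i\<in>UNIV. minv M j i * (\<Sum>l\<in>UNIV. real (M i l) * x l))"
    using assms(2) by simp
  also have "\<dots> = (\<Sum>i\<in>UNIV. \<Sum>l\<in>UNIV. minv M j i * (real (M i l) * x l))"
    by (simp add: sum_distrib_left)
  also have "\<dots> = (\<Sum>l\<in>UNIV. \<Sum>i\<in>UNIV. minv M j i * (real (M i l) * x l))"
    by (rule sum.swap)
  also have "\<dots> = (\<Sum>l\<in>UNIV. (\<Sum>i\<in>UNIV. minv M j i * real (M i l)) * x l)"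
    by (simp add: sum_distrib_right mult.assoc)
  also have "\<dots> = (\<Sum>l\<in>UNIV. (if j = l then 1 else 0) * x l)"
    using inv_facts(2)[OF assms(1)] by simp
  also have "\<dots> = x j" by (rule sum_delta_mult2)
  finally show ?thesis by simp
qed

lemma Mtr_Mtr[simp]: "Mtr (Mtr M) = M" by (simp add: Mtr_def)

lemma Mtr_inv: assumes "invertible_poly M" shows "invertible_poly (Mtr M)"
proof -
  have "matR (Mtr M) = transpose (matR M)"
    by (simp add: vec_eq_iff matR_def Mtr_def transpose_def)
  then show ?thesis using assms transpose_invertible by (simp add: invertible_poly_def)
qed

lemma minv_Mtr: assumes "invertible_poly M" shows "minv (Mtr M) m j = minv M j m"
proof -
  have "\<And>i. (\<Sum>l\<in>UNIV. real (Mtr M i l) * minv M j l) = (if j = i then 1 else 0)"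
    using inv_facts(2)[OF assms, of j] by (simp add: Mtr_def mult.commute)
  from solve[OF Mtr_inv[OF assms] this, of m] show ?thesis by (simp add: sum_delta_mult)
qed

lemma row_nz: assumes "invertible_poly M" shows "(\<Sum>j\<in>UNIV. M i j) \<ge> 1"
proof (rule ccontr)
  assume "\<not> ?thesis"
  then have "sum (M i) UNIV = 0" by linarith
  then have "\<forall>j. M i j = 0" using sum_eq_0_iff[of UNIV "M i"] by simp
  then show False using inv_facts(1)[OF assms, of i i] by simp
qed

lemma col_nz: assumes "invertible_poly M" shows "(\<Sum>i\<in>UNIV. M i k) \<ge> 1"
  using row_nz[OF Mtr_inv[OF assms], of k] by (simp add: Mtr_def)

lemma rows_inj: assumes "invertible_poly M" shows "inj M"
proof (rule injI)
  fix i i' assume "M i = M i'"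
  then have "(\<Sum>j\<in>UNIV. real (M i j) * minv M j i) = (\<Sum>j\<in>UNIV. real (M i' j) * minv M j i)" by simp
  then show "i = i'" using inv_facts(1)[OF assms] by (simp split: if_splits)
qed


lemma vmul_inj: assumes "\<forall>j. h0 j \<noteq> 0" shows "inj_on (vmul h0) K"
proof (rule inj_onI)
  fix x y assume "vmul h0 x = vmul h0 y"
  then have "\<And>j. h0 j * x j = h0 j * y j" by (simp add: vmul_def fun_eq_iff)
  then show "x = y" using assms by (simp add: fun_eq_iff)
qed

lemma char_sum_zero:
  assumes "finite K" "\<forall>j. h0 j \<noteq> 0" "\<forall>h\<in>K. vmul h0 h \<in> K" "mon h0 e \<noteq> 1"
  shows "(\<Sum>h\<in>K. mon h e) = 0"
proof -
  have img: "vmul h0 ` K = K"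
    using assms(1,3) vmul_inj[OF assms(2)] by (intro endo_inj_surj) auto
  have "(\<Sum>h\<in>K. mon h e) = (\<Sum>h\<in>vmul h0 ` K. mon h e)" by (simp only: img)
  also have "\<dots> = (\<Sum>h\<in>K. mon (vmul h0 h) e)"
    by (rule sum.reindex[OF vmul_inj[OF assms(2)], unfolded o_def])
  also have "\<dots> = mon h0 e * (\<Sum>h\<in>K. mon h e)"
    by (simp add: mon_vmul sum_distrib_left)
  finally have "(\<Sum>h\<in>K. mon h e) - mon h0 e * (\<Sum>h\<in>K. mon h e) = 0" by simp
  then have "(1 - mon h0 e) * (\<Sum>h\<in>K. mon h e) = 0" by (simp add: left_diff_distrib)
  then show ?thesis using assms(4) by simp
qed

lemma Wpoly_mon: "Wpoly M x = (\<Sum>i\<in>UNIV. mon x (M i))"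
  by (simp add: Wpoly_def mon_def)




lemma int_mult_bounds:
  fixes e n L :: int
  assumes "e = n * L" "0 < e" "e < 2 * L" "e \<noteq> L"
  shows False
proof -
  have L: "L > 0" using assms by linarith
  consider "n \<le> 0" | "n = 1" | "n \<ge> 2" by linarith
  then show False
  proof cases
    case 1 then have "n * L \<le> 0" using L by (simp add: mult_nonpos_nonneg)
    then show False using assms by simp
  next
    case 2 then show False using assms by simp
  next
    case 3 then have "2 * L \<le> n * L" using L by (intro mult_right_mono) auto
    then show False using assms by linarith
  qed
qed

lemma mono_indep:
  fixes E :: "'m::finite \<Rightarrow> ('n::finite \<Rightarrow> nat)" and c :: "'m \<Rightarrow> complex"
  assumes inj: "inj E" and z: "\<And>x. (\<Sum>i\<in>UNIV. c i * mon x (E i)) = 0"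
  shows "c i0 = 0"
proof -
  define L where "L = Suc (\<Sum>i\<in>UNIV. \<Sum>j\<in>UNIV. E i j)"
  have EL: "E i j < L" for i j
  proof -
    have "E i j \<le> (\<Sum>j\<in>UNIV. E i j)" by (rule member_le_sum) auto
    also have "\<dots> \<le> (\<Sum>i\<in>UNIV. \<Sum>j\<in>UNIV. E i j)"
      by (rule member_le_sum[where f="\<lambda>i. \<Sum>j\<in>UNIV. E i j"]) auto
    finally show ?thesis unfolding L_def by simp
  qed
  have L1: "L \<ge> 1" unfolding L_def by simp
  define U where "U = {\<zeta>::'n \<Rightarrow> complex. \<forall>j. \<zeta> j ^ L = 1}"
  have "U = Pi\<^sub>E UNIV (\<lambda>_. {z::complex. z ^ L = 1})"
    unfolding U_def PiE_UNIV_domain by (auto simp: Pi_def)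
  then have finU: "finite U" using finite_roots_unity[OF L1] by (auto intro!: finite_PiE)
  have oneU: "(\<lambda>_. 1) \<in> U" unfolding U_def by simp
  define f where "f = (\<lambda>j. L - E i0 j)"
  define S where "S i = (\<Sum>\<zeta>\<in>U. mon \<zeta> (\<lambda>j. E i j + f j))" for i
  have "0 = (\<Sum>\<zeta>\<in>U. (\<Sum>i\<in>UNIV. c i * mon \<zeta> (E i)) * mon \<zeta> f)" using z by simp
  also have "\<dots> = (\<Sum>\<zeta>\<in>U. \<Sum>i\<in>UNIV. c i * mon \<zeta> (\<lambda>j. E i j + f j))"
    by (simp add: sum_distrib_right mon_add mult.assoc)
  also have "\<dots> = (\<Sum>i\<in>UNIV. \<Sum>\<zeta>\<in>U. c i * mon \<zeta> (\<lambda>j. E i j + f j))"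
    by (rule sum.swap)
  also have "\<dots> = (\<Sum>i\<in>UNIV. c i * S i)"
    by (simp add: S_def sum_distrib_left)
  also have "\<dots> = (\<Sum>i\<in>UNIV. if i = i0 then c i0 * card U else 0)"
  proof (rule sum.cong[OF refl])
    fix i
    show "c i * S i = (if i = i0 then c i0 * of_nat (card U) else 0)"
    proof (cases "i = i0")
      case True
      have "(\<lambda>j. E i j + f j) = (\<lambda>_. L)" using True EL unfolding f_def by (auto simp: fun_eq_iff less_imp_le)
      then have "S i = (\<Sum>\<zeta>\<in>U. 1)" unfolding S_def
        by (intro sum.cong) (auto simp: mon_def U_def)
      then show ?thesis using True by simp
    next
      case False
      have "E i \<noteq> E i0" using inj False by (simp add: inj_eq)
      then obtain j where j: "E i j \<noteq> E i0 j" by (meson ext)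
      define \<omega> where "\<omega> = cis (2*pi / real L)"
      define h0 where "h0 = (\<lambda>k. if k = j then \<omega> else 1)"
      have om: "\<omega> ^ L = 1" unfolding \<omega>_def Complex.DeMoivre using L1 by simp
      have h0nz: "\<forall>k. h0 k \<noteq> 0" unfolding h0_def \<omega>_def by (simp add: cis_neq_zero)
      have h0U: "\<forall>h\<in>U. vmul h0 h \<in> U"
        using om unfolding U_def vmul_def h0_def by (simp add: power_mult_distrib)
      define e where "e = (\<lambda>k. E i k + f k)"
      have "mon h0 e = (\<Prod>k\<in>UNIV. if k = j then \<omega> ^ e j else 1)"
        unfolding mon_def h0_def by (rule prod.cong) auto
      also have "\<dots> = \<omega> ^ e j" by simp
      finally have me: "mon h0 e = cis (real (e j) * (2*pi / real L))" unfolding \<omega>_def Complex.DeMoivre .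
      have "mon h0 e \<noteq> 1"
      proof
        assume "mon h0 e = 1"
        then obtain n::int where n: "real (e j) * (2*pi / real L) = 2*pi* of_int n"
          using me cis_eq_1_iff by auto
        have "real (e j) * (2*pi / real L) = 2*pi*(real (e j) / real L)" by simp
        with n have "2*pi*(real (e j) / real L) = 2*pi* of_int n" by simp
        moreover have "2*pi \<noteq> (0::real)" by simp
        ultimately have "real (e j) / real L = of_int n" using mult_left_cancel by blast
        then have "real (e j) = of_int n * real L" using L1 by (simp add: divide_eq_eq)
        then have "real_of_int (int (e j)) = real_of_int (n * int L)" by simp
        then have "int (e j) = n * int L" using of_int_eq_iff by blast
        moreover have "0 < int (e j)" "int (e j) < 2 * int L" "int (e j) \<noteq> int L"
          using EL[of i j] EL[of i0 j] j unfolding e_def f_def by auto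
        ultimately show False using int_mult_bounds by blast
      qed
      then have "S i = 0" unfolding S_def e_def[symmetric]
        using char_sum_zero[OF finU h0nz h0U] by blast
      then show ?thesis using False by simp
    qed
  qed
  also have "\<dots> = c i0 * card U" by simp
  finally have "c i0 * card U = 0" by simp
  moreover have "card U \<noteq> 0" using finU oneU by auto
  ultimately show ?thesis by simp
qed



lemma sum_MA: assumes "invertible_poly M"
  shows "(\<Sum>j\<in>UNIV. real (M i j) * (\<Sum>k\<in>UNIV. minv M j k * x k)) = x i"
proof -
  have "(\<Sum>j\<in>UNIV. real (M i j) * (\<Sum>k\<in>UNIV. minv M j k * x k))
      = (\<Sum>j\<in>UNIV. \<Sum>k\<in>UNIV. real (M i j) * (minv M j k * x k))" by (simp add: sum_distrib_left)
  also have "\<dots> = (\<Sum>k\<in>UNIV. \<Sum>j\<in>UNIV. real (M i j) * (minv M j k * x k))" by (rule sum.swap)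
  also have "\<dots> = (\<Sum>k\<in>UNIV. (\<Sum>j\<in>UNIV. real (M i j) * minv M j k) * x k)"
    by (simp add: sum_distrib_right mult.assoc)
  also have "\<dots> = (\<Sum>k\<in>UNIV. (if i = k then 1 else 0) * x k)" using inv_facts(1)[OF assms] by simp
  also have "\<dots> = x i" by (rule sum_delta_mult2)
  finally show ?thesis .
qed

lemma sum_A_rowsum: assumes "invertible_poly M"
  shows "(\<Sum>k\<in>UNIV. minv M j k * (\<Sum>l\<in>UNIV. real (M k l))) = 1"
proof -
  have "(\<Sum>k\<in>UNIV. minv M j k * (\<Sum>l\<in>UNIV. real (M k l)))
      = (\<Sum>k\<in>UNIV. \<Sum>l\<in>UNIV. minv M j k * real (M k l))" by (simp add: sum_distrib_left)
  also have "\<dots> = (\<Sum>l\<in>UNIV. \<Sum>k\<in>UNIV. minv M j k * real (M k l))" by (rule sum.swap)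
  also have "\<dots> = (\<Sum>l\<in>UNIV. (if j = l then 1 else 0))" using inv_facts(2)[OF assms] by simp
  also have "\<dots> = 1" by simp
  finally show ?thesis .
qed

lemma cis_nat: "cis (2*pi*real n) = 1"
  by (rule cis_multiple_2pi) simp

lemma mon_Pm: "mon (Pm M s) r = cis (2*pi * (\<Sum>j\<in>UNIV. real (r j) * (\<Sum>k\<in>UNIV. minv M j k * real (s k))))"
proof -
  have "mon (Pm M s) r = (\<Prod>j\<in>UNIV. cis (real (r j) * (2*pi*(\<Sum>k\<in>UNIV. minv M j k * real (s k)))))"
    by (simp add: mon_def Pm_def Complex.DeMoivre)
  also have "\<dots> = cis (\<Sum>j\<in>UNIV. real (r j) * (2*pi*(\<Sum>k\<in>UNIV. minv M j k * real (s k))))"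
    by (rule prod_cis)
  also have "(\<Sum>j\<in>UNIV. real (r j) * (2*pi*(\<Sum>k\<in>UNIV. minv M j k * real (s k))))
     = 2*pi * (\<Sum>j\<in>UNIV. real (r j) * (\<Sum>k\<in>UNIV. minv M j k * real (s k)))"
    by (simp add: sum_distrib_left algebra_simps)
  finally show ?thesis .
qed

lemma aut_of_mon:
  assumes "\<forall>j. g j \<noteq> 0" "\<forall>i. mon g (M i) = 1"
  shows "g \<in> Aut M"
proof -
  have "Wpoly M (\<lambda>j. g j * x j) = Wpoly M x" for x
  proof -
    have "Wpoly M (\<lambda>j. g j * x j) = (\<Sum>i\<in>UNIV. mon (vmul g x) (M i))"
      by (simp add: Wpoly_mon vmul_def)
    also have "\<dots> = (\<Sum>i\<in>UNIV. mon x (M i))" using assms(2) by (simp add: mon_vmul)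
    finally show ?thesis by (simp add: Wpoly_mon)
  qed
  then show ?thesis using assms(1) by (simp add: Aut_def)
qed

lemma Pm_aut: assumes "invertible_poly M" shows "Pm M s \<in> Aut M"
proof (rule aut_of_mon)
  show "\<forall>j. Pm M s j \<noteq> 0" by (simp add: Pm_def cis_neq_zero)
  show "\<forall>i. mon (Pm M s) (M i) = 1"
    using sum_MA[OF assms] cis_nat by (simp add: mon_Pm)
qed

lemma aut_mon:
  assumes inv: "invertible_poly M" and g: "g \<in> Aut M"
  shows "\<forall>j. g j \<noteq> 0" "mon g (M i) = 1"
proof -
  show "\<forall>j. g j \<noteq> 0" using g by (simp add: Aut_def)
  have "(\<Sum>i\<in>UNIV. (mon g (M i) - 1) * mon x (M i)) = 0" for x
  proof -
    have "Wpoly M (\<lambda>j. g j * x j) = Wpoly M x" using g by (simp add: Aut_def)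
    then have "(\<Sum>i\<in>UNIV. mon g (M i) * mon x (M i)) = (\<Sum>i\<in>UNIV. mon x (M i))"
      by (simp add: Wpoly_mon mon_vmul[symmetric] vmul_def)
    then show ?thesis by (simp add: left_diff_distrib sum_subtractf)
  qed
  from mono_indep[OF rows_inj[OF inv] this] show "mon g (M i) = 1" by simp
qed


lemma aut_log:
  assumes inv: "invertible_poly M" and nz: "\<forall>j. g j \<noteq> 0" and m: "\<forall>i. mon g (M i) = 1"
  shows "\<exists>a::'n::finite \<Rightarrow> int. \<forall>j. g j = cis (2*pi*(\<Sum>i\<in>UNIV. minv M j i * of_int (a i)))"
proof -
  define z where "z j = Ln (g j)" for j
  have gz: "g j = exp (z j)" for j using nz by (simp add: z_def exp_Ln)
  have e: "exp (\<Sum>j\<in>UNIV. of_nat (M i j) * z j) = 1" for i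
  proof -
    have "exp (\<Sum>j\<in>UNIV. of_nat (M i j) * z j) = (\<Prod>j\<in>UNIV. exp (z j) ^ M i j)"
      by (simp add: exp_sum exp_of_nat_mult)
    also have "\<dots> = mon g (M i)" by (simp add: mon_def gz)
    finally show ?thesis using m by simp
  qed
  have "\<forall>i. \<exists>n::int. (\<Sum>j\<in>UNIV. real (M i j) * Re (z j)) = 0
          \<and> (\<Sum>j\<in>UNIV. real (M i j) * Im (z j)) = 2*pi* of_int n"
  proof
    fix i
    from e[of i] obtain n::int where n1: "Re (\<Sum>j\<in>UNIV. of_nat (M i j) * z j) = 0"
      and n2: "Im (\<Sum>j\<in>UNIV. of_nat (M i j) * z j) = of_int (2*n) * pi"
      unfolding exp_eq_1 by blast
    show "\<exists>n::int. (\<Sum>j\<in>UNIV. real (M i j) * Re (z j)) = 0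
          \<and> (\<Sum>j\<in>UNIV. real (M i j) * Im (z j)) = 2*pi* of_int n"
      using n1 n2 by (intro exI[of _ n]) simp
  qed
  from choice[OF this] obtain a :: "'n \<Rightarrow> int" where
    a: "\<And>i. (\<Sum>j\<in>UNIV. real (M i j) * Re (z j)) = 0"
       "\<And>i. (\<Sum>j\<in>UNIV. real (M i j) * Im (z j)) = 2*pi* of_int (a i)" by blast
  have re: "Re (z j) = 0" for j
    using solve[OF inv, of "\<lambda>j. Re (z j)" "\<lambda>_. 0", OF a(1)] by simp
  have im: "Im (z j) = 2*pi*(\<Sum>i\<in>UNIV. minv M j i * of_int (a i))" for j
  proof -
    have "Im (z j) = (\<Sum>i\<in>UNIV. minv M j i * (2*pi* of_int (a i)))"
      by (rule solve[OF inv, of "\<lambda>j. Im (z j)" "\<lambda>i. 2*pi* of_int (a i)", OF a(2)])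
    then show ?thesis by (simp add: sum_distrib_left algebra_simps)
  qed
  have "g j = cis (2*pi*(\<Sum>i\<in>UNIV. minv M j i * of_int (a i)))" for j
  proof -
    have "z j = \<i> * complex_of_real (Im (z j))" using re[of j] by (simp add: complex_eq_iff)
    then have "g j = cis (Im (z j))" using gz[of j] by (simp add: cis_conv_exp)
    then show ?thesis using im[of j] by simp
  qed
  then show ?thesis by blast
qed

lemma aut_shift:
  assumes inv: "invertible_poly M"
    and g: "\<forall>j. g j = cis (2*pi*(\<Sum>i\<in>UNIV. minv M j i * of_int (a i)))"
  shows "\<exists>s. g = Pm M s"
proof -
  define T where "T = (\<Sum>i\<in>UNIV. \<bar>a i\<bar>)"
  define R where "R i = (\<Sum>j\<in>UNIV. M i j)" for i
  define s where "s i = nat (a i + T * int (R i))" for i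
  have sv: "real (s i) = of_int (a i) + of_int T * real (R i)" for i
  proof -
    have "\<bar>a i\<bar> \<le> T" unfolding T_def by (rule member_le_sum) auto
    moreover have "R i \<ge> 1" using row_nz[OF inv] unfolding R_def by simp
    then have "int (R i) \<ge> 1" by linarith
    moreover have "T \<ge> 0" unfolding T_def by (simp add: sum_nonneg)
    ultimately have "T * 1 \<le> T * int (R i)" by (intro mult_left_mono) auto
    then have "a i + T * int (R i) \<ge> 0" using \<open>\<bar>a i\<bar> \<le> T\<close> by linarith
    then show ?thesis unfolding s_def by simp
  qed
  have "Pm M s j = g j" for j
  proof -
    have "(\<Sum>k\<in>UNIV. minv M j k * real (s k))
        = (\<Sum>k\<in>UNIV. minv M j k * of_int (a k) + of_int T * (minv M j k * (\<Sum>l\<in>UNIV. real (M k l))))"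
      by (rule sum.cong) (simp_all add: sv R_def algebra_simps)
    also have "\<dots> = (\<Sum>k\<in>UNIV. minv M j k * of_int (a k))
           + of_int T * (\<Sum>k\<in>UNIV. minv M j k * (\<Sum>l\<in>UNIV. real (M k l)))"
      by (simp add: sum.distrib sum_distrib_left)
    also have "\<dots> = (\<Sum>k\<in>UNIV. minv M j k * of_int (a k)) + of_int T"
      using sum_A_rowsum[OF inv] by simp
    finally have "(\<Sum>k\<in>UNIV. minv M j k * real (s k)) = (\<Sum>k\<in>UNIV. minv M j k * of_int (a k)) + of_int T" .
    then show ?thesis using g cis_int by (simp add: Pm_def)
  qed
  then show ?thesis by (intro exI[of _ s]) (auto simp: fun_eq_iff)
qed

lemma aut_char: assumes inv: "invertible_poly M"
  shows "g \<in> Aut M \<longleftrightarrow> (\<exists>s. g = Pm M s)"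
proof
  assume "g \<in> Aut M"
  then have "\<forall>j. g j \<noteq> 0" "\<forall>i. mon g (M i) = 1" using aut_mon[OF inv] by auto
  then obtain a where "\<forall>j. g j = cis (2*pi*(\<Sum>i\<in>UNIV. minv M j i * of_int (a i)))"
    using aut_log[OF inv] by blast
  then show "\<exists>s. g = Pm M s" using aut_shift[OF inv] by blast
next
  assume "\<exists>s. g = Pm M s"
  then show "g \<in> Aut M" using Pm_aut[OF inv] by blast
qed

lemma aut_finite: fixes M :: "'n::finite \<Rightarrow> 'n \<Rightarrow> nat" assumes inv: "invertible_poly M" shows "finite (Aut M)"
proof -
  define R where "R = (\<Sum>i\<in>UNIV. \<Sum>j\<in>UNIV. M i j)"
  define Q where "Q a = (\<lambda>j. cis (2*pi*(\<Sum>i\<in>UNIV. minv M j i * of_int (a i))))" for a :: "'n \<Rightarrow> int"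
  define F where "F = {a::'n\<Rightarrow>int. \<forall>i. a i \<in> {0..int R}}"
  have "F = Pi\<^sub>E UNIV (\<lambda>_. {0..int R})" unfolding F_def PiE_UNIV_domain by (auto simp: Pi_def)
  then have finF: "finite F" by (auto intro!: finite_PiE)
  have "Aut M \<subseteq> Q ` F"
  proof
    fix g assume "g \<in> Aut M"
    then obtain s where gs: "g = Pm M s" using aut_char[OF inv] by blast
    define \<theta> where "\<theta> j = (\<Sum>k\<in>UNIV. minv M j k * real (s k))" for j
    define fl where "fl j = \<lfloor>\<theta> j\<rfloor>" for j
    define a' where "a' i = int (s i) - (\<Sum>j\<in>UNIV. int (M i j) * fl j)" for i
    have ra: "real_of_int (a' i) = (\<Sum>j\<in>UNIV. real (M i j) * (\<theta> j - of_int (fl j)))" for i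
    proof -
      have "(\<Sum>j\<in>UNIV. real (M i j) * \<theta> j) = real (s i)" unfolding \<theta>_def by (rule sum_MA[OF inv])
      then show ?thesis unfolding a'_def by (simp add: right_diff_distrib sum_subtractf)
    qed
    have th: "\<theta> j - of_int (fl j) = (\<Sum>i\<in>UNIV. minv M j i * of_int (a' i))" for j
      by (rule solve[OF inv, of "\<lambda>j. \<theta> j - of_int (fl j)" "\<lambda>i. of_int (a' i)"]) (simp add: ra)
    have "g j = Q a' j" for j
    proof -
      have "g j = cis (2*pi*((\<theta> j - of_int (fl j)) + of_int (fl j)))" by (simp add: gs Pm_def \<theta>_def)
      also have "\<dots> = cis (2*pi*(\<theta> j - of_int (fl j)))" by (rule cis_int)
      finally show ?thesis by (simp add: Q_def th)
    qed
    then have "g = Q a'" by auto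
    moreover have "a' \<in> F"
    proof -
      have "a' i \<in> {0..int R}" for i
      proof -
        have fr0: "0 \<le> \<theta> j - of_int (fl j)" for j unfolding fl_def by simp
        have fr1: "\<theta> j - of_int (fl j) \<le> 1" for j unfolding fl_def
          using real_of_int_floor_add_one_gt[of "\<theta> j"] by linarith
        have "0 \<le> (\<Sum>j\<in>UNIV. real (M i j) * (\<theta> j - of_int (fl j)))"
          using fr0 by (intro sum_nonneg) simp
        moreover have "(\<Sum>j\<in>UNIV. real (M i j) * (\<theta> j - of_int (fl j))) \<le> (\<Sum>j\<in>UNIV. real (M i j))"
          using fr1 by (intro sum_mono) (simp add: mult_left_le)
        moreover have "(\<Sum>j\<in>UNIV. M i j) \<le> R" unfolding R_def
          by (rule member_le_sum[where f="\<lambda>i. \<Sum>j\<in>UNIV. M i j"]) auto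
        then have "(\<Sum>j\<in>UNIV. real (M i j)) \<le> real R" by (metis of_nat_le_iff of_nat_sum)
        ultimately have "0 \<le> real_of_int (a' i)" "real_of_int (a' i) \<le> real_of_int (int R)"
          using ra[of i] by auto
        then show ?thesis by simp
      qed
      then show ?thesis unfolding F_def by blast
    qed
    ultimately show "g \<in> Q ` F" by blast
  qed
  then show ?thesis using finF finite_subset by blast
qed




definition dt :: "('n::finite \<Rightarrow> complex) \<Rightarrow> complex" where "dt g = (\<Prod>j\<in>UNIV. g j)"

lemma genby_sub: "is_subgroup H \<Longrightarrow> S \<subseteq> H \<Longrightarrow> genby S \<subseteq> H"
  unfolding genby_def by blast

lemma genby_incl: "S \<subseteq> genby S"
  unfolding genby_def by blast

lemma genby_subgroup: "is_subgroup (genby S)"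
  unfolding genby_def is_subgroup_def by blast

lemma ann_subgroup: "is_subgroup {h. mon h r = 1}"
  unfolding is_subgroup_def by (simp add: mon_vmul[unfolded vmul_def] mon_inv)

lemma ann_genby: "ann (genby S) = ann S"
proof
  show "ann (genby S) \<subseteq> ann S" using genby_incl unfolding ann_def by blast
  show "ann S \<subseteq> ann (genby S)"
  proof
    fix r assume "r \<in> ann S"
    then have "S \<subseteq> {h. mon h r = 1}" unfolding ann_def by blast
    then have "genby S \<subseteq> {h. mon h r = 1}" using genby_sub ann_subgroup by blast
    then show "r \<in> ann (genby S)" unfolding ann_def by blast
  qed
qed

lemma rhobar_prod: assumes inv: "invertible_poly M"
  shows "(\<lambda>j. \<Prod>k\<in>UNIV. rhobar M k j ^ r k) = Pm (Mtr M) r"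
proof
  fix j
  have "(\<Prod>k\<in>UNIV. rhobar M k j ^ r k) = (\<Prod>k\<in>UNIV. cis (real (r k) * (2*pi*minv M k j)))"
    by (simp add: rhobar_def Complex.DeMoivre)
  also have "\<dots> = cis (\<Sum>k\<in>UNIV. real (r k) * (2*pi*minv M k j))" by (rule prod_cis)
  also have "(\<Sum>k\<in>UNIV. real (r k) * (2*pi*minv M k j)) = 2*pi*(\<Sum>k\<in>UNIV. minv (Mtr M) j k * real (r k))"
    by (simp add: minv_Mtr[OF inv] sum_distrib_left algebra_simps)
  finally show "(\<Prod>k\<in>UNIV. rhobar M k j ^ r k) = Pm (Mtr M) r j" by (simp add: Pm_def)
qed

lemma BHdual_eq: assumes inv: "invertible_poly M"
  shows "BHdual M H = Pm (Mtr M) ` ann H"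
  unfolding BHdual_def ann_def rhobar_prod[OF inv] mon_def by blast

lemma star_eq: assumes inv: "invertible_poly M"
  shows "star M G = Pm (Mtr M) ` ann (insert (Jgrad M) G)"
  unfolding star_def BHdual_eq[OF inv] ann_genby ..

lemma qweight_eq: assumes inv: "invertible_poly M"
  shows "qweight M = (\<lambda>j. \<Sum>k\<in>UNIV. minv M j k)"
  unfolding qweight_def
proof (rule the_equality)
  show "\<forall>i. (\<Sum>j\<in>UNIV. real (M i j) * (\<Sum>k\<in>UNIV. minv M j k)) = 1"
    using sum_MA[OF inv, of _ "\<lambda>_. 1"] by simp
next
  fix q assume q: "\<forall>i. (\<Sum>j\<in>UNIV. real (M i j) * q j) = 1"
  show "q = (\<lambda>j. \<Sum>k\<in>UNIV. minv M j k)"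
  proof
    fix j
    have "q j = (\<Sum>i\<in>UNIV. minv M j i * 1)" by (rule solve[OF inv]) (use q in simp)
    then show "q j = (\<Sum>k\<in>UNIV. minv M j k)" by simp
  qed
qed

lemma Jgrad_Pm: assumes inv: "invertible_poly M"
  shows "Jgrad M = Pm M (\<lambda>_. 1)"
  by (simp add: Jgrad_def Pm_def qweight_eq[OF inv])

lemma dt_Jgrad: "dt (Jgrad M) = cis (2*pi*(\<Sum>j\<in>UNIV. qweight M j))"
  by (simp add: dt_def Jgrad_def prod_cis sum_distrib_left)

lemma qweight_Mtr_sum: assumes inv: "invertible_poly M"
  shows "(\<Sum>j\<in>UNIV. qweight (Mtr M) j) = (\<Sum>j\<in>UNIV. qweight M j)"
proof -
  have "(\<Sum>j\<in>UNIV. \<Sum>k\<in>UNIV. minv M k j) = (\<Sum>k\<in>UNIV. \<Sum>j\<in>UNIV. minv M k j)"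
    by (rule sum.swap)
  then show ?thesis by (simp add: qweight_eq[OF inv] qweight_eq[OF Mtr_inv[OF inv]] minv_Mtr[OF inv])
qed

lemma pairing: assumes inv: "invertible_poly M"
  shows "mon (Pm M s) r = mon (Pm (Mtr M) r) s"
proof -
  have "(\<Sum>j\<in>UNIV. real (r j) * (\<Sum>k\<in>UNIV. minv M j k * real (s k)))
      = (\<Sum>j\<in>UNIV. \<Sum>k\<in>UNIV. real (r j) * minv M j k * real (s k))"
    by (simp add: sum_distrib_left mult.assoc)
  also have "\<dots> = (\<Sum>k\<in>UNIV. \<Sum>j\<in>UNIV. real (r j) * minv M j k * real (s k))" by (rule sum.swap)
  also have "\<dots> = (\<Sum>k\<in>UNIV. real (s k) * (\<Sum>j\<in>UNIV. minv (Mtr M) k j * real (r j)))"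
    by (simp add: minv_Mtr[OF inv] sum_distrib_left algebra_simps)
  finally show ?thesis by (simp add: mon_Pm)
qed

lemma dt_Pm: assumes inv: "invertible_poly M"
  shows "dt (Pm M s) = mon (Jgrad (Mtr M)) s"
proof -
  have "dt (Pm M s) = cis (\<Sum>j\<in>UNIV. 2*pi*(\<Sum>k\<in>UNIV. minv M j k * real (s k)))"
    by (simp add: dt_def Pm_def prod_cis)
  also have "(\<Sum>j\<in>UNIV. 2*pi*(\<Sum>k\<in>UNIV. minv M j k * real (s k)))
      = 2*pi*(\<Sum>j\<in>UNIV. \<Sum>k\<in>UNIV. minv M j k * real (s k))" by (simp add: sum_distrib_left)
  also have "(\<Sum>j\<in>UNIV. \<Sum>k\<in>UNIV. minv M j k * real (s k)) = (\<Sum>k\<in>UNIV. \<Sum>j\<in>UNIV. minv M j k * real (s k))"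
    by (rule sum.swap)
  also have "\<dots> = (\<Sum>k\<in>UNIV. real (s k) * (\<Sum>j\<in>UNIV. minv (Mtr M) k j * real (1::nat)))"
    by (simp add: minv_Mtr[OF inv] sum_distrib_left algebra_simps)
  finally show ?thesis
    by (simp add: Jgrad_Pm[OF Mtr_inv[OF inv]] mon_Pm)
qed

lemma mon_sq: "mon (sq h) r = (mon h r)^2"
proof -
  have "(h j ^ 2) ^ r j = (h j ^ r j) ^ 2" for j by (metis power_mult mult.commute)
  then have "mon (sq h) r = (\<Prod>j\<in>UNIV. (h j ^ r j) ^ 2)" by (simp add: mon_def sq_def)
  also have "\<dots> = (mon h r)^2" by (simp add: mon_def prod_power_distrib)
  finally show ?thesis .
qed

lemma mon_two: "mon h (\<lambda>_. 2) = (dt h)^2"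
  by (simp add: mon_def dt_def prod_power_distrib)

lemma dt_vmul: "dt (\<lambda>j. a j * b j) = dt a * dt b"
  by (simp add: dt_def prod.distrib)

lemma aut_subgroup: assumes inv: "invertible_poly M" shows "is_subgroup (Aut M)"
  unfolding is_subgroup_def
proof (intro conjI ballI)
  show "(\<lambda>_. 1) \<in> Aut M" by (rule aut_of_mon) auto
next
  fix a b assume a: "a \<in> Aut M" and b: "b \<in> Aut M"
  show "(\<lambda>j. a j * b j) \<in> Aut M"
    using aut_mon[OF inv a] aut_mon[OF inv b] mon_vmul[of a b, unfolded vmul_def]
    by (intro aut_of_mon) auto
next
  fix a assume a: "a \<in> Aut M"
  show "(\<lambda>j. inverse (a j)) \<in> Aut M"
    using aut_mon[OF inv a] mon_inv[of a] by (intro aut_of_mon) auto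
qed

lemma SL_subgroup: fixes M :: "'a::finite \<Rightarrow> 'a \<Rightarrow> nat" assumes inv: "invertible_poly M" shows "is_subgroup (SL M)"
proof -
  have pi: "(\<Prod>j\<in>UNIV. inverse (a j)) = inverse (\<Prod>j\<in>UNIV. a j)" for a :: "'a \<Rightarrow> complex"
    using prod_inversef[of a UNIV] by (simp add: o_def)
  show ?thesis
    using aut_subgroup[OF inv] unfolding is_subgroup_def SL_def
    by (auto simp: prod.distrib pi)
qed




definition ev :: "(complex \<times> ('n::finite \<Rightarrow> nat)) list \<Rightarrow> ('n \<Rightarrow> complex) \<Rightarrow> complex" where
  "ev L x = sum_list (map (\<lambda>p. fst p * mon x (snd p)) L)"

definition pmul :: "(complex \<times> ('n::finite \<Rightarrow> nat)) list \<Rightarrow> (complex \<times> ('n \<Rightarrow> nat)) list \<Rightarrow> (complex \<times> ('n \<Rightarrow> nat)) list" where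
  "pmul L1 L2 = concat (map (\<lambda>p. map (\<lambda>q. (fst p * fst q, \<lambda>k. snd p k + snd q k)) L2) L1)"

lemma ev_Nil[simp]: "ev [] x = 0" by (simp add: ev_def)
lemma ev_Cons[simp]: "ev (p # L) x = fst p * mon x (snd p) + ev L x" by (simp add: ev_def)
lemma ev_append: "ev (L1 @ L2) x = ev L1 x + ev L2 x" by (simp add: ev_def)
lemma ev_map: "ev (map (\<lambda>q. (c * fst q, \<lambda>k. e k + snd q k)) L) x = c * mon x e * ev L x"
  by (induction L) (simp_all add: mon_add algebra_simps)
lemma ev_pmul: "ev (pmul L1 L2) x = ev L1 x * ev L2 x"
proof (induction L1)
  case Nil then show ?case by (simp add: pmul_def)
next
  case (Cons p L1)
  have "pmul (p # L1) L2 = map (\<lambda>q. (fst p * fst q, \<lambda>k. snd p k + snd q k)) L2 @ pmul L1 L2"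
    by (simp add: pmul_def)
  then show ?case using Cons ev_map[of "fst p" "snd p" L2 x] by (simp add: ev_append distrib_right)
qed

definition polyfun :: "(('n::finite \<Rightarrow> complex) \<Rightarrow> complex) \<Rightarrow> bool" where
  "polyfun f \<longleftrightarrow> (\<exists>L. \<forall>x. f x = ev L x)"

lemma polyfun_const: "polyfun (\<lambda>x. c)"
  unfolding polyfun_def by (rule exI[of _ "[(c, \<lambda>_. 0)]"]) simp

lemma mon_delta: "mon x (\<lambda>k. if k = j then 1 else 0) = x j"
proof -
  have "mon x (\<lambda>k. if k = j then 1 else 0) = (\<Prod>k\<in>UNIV. if k = j then x k else 1)"
    unfolding mon_def by (rule prod.cong) auto
  then show ?thesis by simp
qed

lemma polyfun_affine: "polyfun (\<lambda>x. (x j - a) * b)"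
  unfolding polyfun_def
  by (rule exI[of _ "[(b, \<lambda>k. if k = j then 1 else 0), (-(a*b), \<lambda>_. 0)]"]) (simp add: mon_delta algebra_simps)

lemma polyfun_mult: "polyfun f \<Longrightarrow> polyfun g \<Longrightarrow> polyfun (\<lambda>x. f x * g x)"
  unfolding polyfun_def by (metis ev_pmul)

lemma polyfun_prod: "finite S \<Longrightarrow> (\<forall>p\<in>S. polyfun (F p)) \<Longrightarrow> polyfun (\<lambda>x. \<Prod>p\<in>S. F p x)"
proof (induction S rule: finite_induct)
  case empty then show ?case by (simp add: polyfun_const)
next
  case (insert a S)
  then show ?case by (simp add: polyfun_mult)
qed

lemma avg:
  assumes finK: "finite K" and sub: "is_subgroup K" and nzK: "\<forall>h\<in>K. \<forall>j. h j \<noteq> 0"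
    and hyp: "\<forall>r. (\<forall>h\<in>K. mon h r = 1) \<longrightarrow> mon g r = 1"
  shows "(\<Sum>h\<in>K. ev L (vmul g h)) = (\<Sum>h\<in>K. ev L h)"
proof (induction L)
  case Nil then show ?case by simp
next
  case (Cons p L)
  obtain c e where p: "p = (c, e)" by (cases p)
  have split: "(\<Sum>h\<in>K. mon (vmul g h) e) = mon g e * (\<Sum>h\<in>K. mon h e)"
    by (simp add: mon_vmul sum_distrib_left)
  have key: "(\<Sum>h\<in>K. mon (vmul g h) e) = (\<Sum>h\<in>K. mon h e)"
  proof (cases "\<forall>h\<in>K. mon h e = 1")
    case True then have "mon g e = 1" using hyp by blast
    then show ?thesis using split by simp
  next
    case False then obtain h0 where h0: "h0 \<in> K" "mon h0 e \<noteq> 1" by blast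
    have "\<forall>h\<in>K. vmul h0 h \<in> K" using sub h0(1) by (simp add: is_subgroup_def vmul_def)
    then have "(\<Sum>h\<in>K. mon h e) = 0"
      using h0 nzK finK by (intro char_sum_zero) auto
    then show ?thesis using split by simp
  qed
  have "(\<Sum>h\<in>K. ev (p # L) (vmul g h)) = c * (\<Sum>h\<in>K. mon (vmul g h) e) + (\<Sum>h\<in>K. ev L (vmul g h))"
    by (simp add: p sum.distrib sum_distrib_left)
  also have "\<dots> = c * (\<Sum>h\<in>K. mon h e) + (\<Sum>h\<in>K. ev L h)" using key Cons by simp
  also have "\<dots> = (\<Sum>h\<in>K. ev (p # L) h)"
    by (simp add: p sum.distrib sum_distrib_left)
  finally show ?case .
qed

lemma separation:
  fixes K :: "('n::finite \<Rightarrow> complex) set"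
  assumes finK: "finite K" and sub: "is_subgroup K" and nzK: "\<forall>h\<in>K. \<forall>j. h j \<noteq> 0"
    and nzg: "\<forall>j. g j \<noteq> 0"
    and hyp: "\<forall>r. (\<forall>h\<in>K. mon h r = 1) \<longrightarrow> mon g r = 1"
  shows "g \<in> K"
proof (rule ccontr)
  assume gK: "g \<notin> K"
  define one where "one = (\<lambda>_::'n. 1::complex)"
  have oneK: "one \<in> K" using sub by (simp add: is_subgroup_def one_def)
  define S where "S = (K \<union> vmul g ` K) - {one}"
  have finS: "finite S" using finK by (simp add: S_def)
  have "\<forall>p\<in>S. \<exists>j. p j \<noteq> 1" unfolding S_def one_def by (auto simp: fun_eq_iff)
  then obtain jp where jp: "\<forall>p\<in>S. p (jp p) \<noteq> 1" by metis
  define f where "f x = (\<Prod>p\<in>S. (x (jp p) - p (jp p)) * inverse (1 - p (jp p)))" for x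
  have pf: "polyfun f" unfolding f_def
    by (intro polyfun_prod finS ballI polyfun_affine)
  then obtain L where L: "\<And>x. f x = ev L x" unfolding polyfun_def by blast
  have f1: "f one = 1"
  proof -
    have "f one = (\<Prod>p\<in>S. 1)" unfolding f_def one_def
      by (rule prod.cong[OF refl]) (use jp in auto)
    then show ?thesis by simp
  qed
  have f0: "f p = 0" if "p \<in> S" for p
  proof -
    have "(p (jp p) - p (jp p)) * inverse (1 - p (jp p)) = 0" by simp
    then show ?thesis unfolding f_def using finS that by (auto simp: prod_zero_iff)
  qed
  have "(\<Sum>h\<in>K. f h) = (\<Sum>h\<in>K. if h = one then 1 else 0)"
  proof (rule sum.cong[OF refl])
    fix h assume "h \<in> K"
    then show "f h = (if h = one then 1 else 0)"
      using f1 f0[of h] by (auto simp: S_def)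
  qed
  also have "\<dots> = 1" using oneK finK by simp
  finally have s1: "(\<Sum>h\<in>K. f h) = 1" .
  have "(\<Sum>h\<in>K. f (vmul g h)) = (\<Sum>h\<in>K. 0)"
  proof (rule sum.cong[OF refl])
    fix h assume hK: "h \<in> K"
    have "vmul g h \<noteq> one"
    proof
      assume "vmul g h = one"
      then have "\<And>j. g j * h j = 1" by (simp add: vmul_def one_def fun_eq_iff)
      then have "g = (\<lambda>j. inverse (h j))" using nzK hK by (auto simp: fun_eq_iff field_simps)
      then have "g \<in> K" using sub hK by (simp add: is_subgroup_def)
      then show False using gK by simp
    qed
    then have "vmul g h \<in> S" using hK by (simp add: S_def)
    then show "f (vmul g h) = 0" by (rule f0)
  qed
  then have s0: "(\<Sum>h\<in>K. f (vmul g h)) = 0" by simp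
  have "(\<Sum>h\<in>K. ev L (vmul g h)) = (\<Sum>h\<in>K. ev L h)" by (rule avg[OF finK sub nzK hyp])
  then show False using s0 s1 by (simp add: L)
qed




lemma mon_colsum: assumes inv: "invertible_poly M" and h: "h \<in> Aut M"
  shows "mon h (\<lambda>k. (\<Sum>i\<in>UNIV. M i k) * L) = 1"
proof -
  have "mon h (\<lambda>k. (\<Sum>i\<in>UNIV. M i k) * L) = (\<Prod>k\<in>UNIV. (\<Prod>i\<in>UNIV. h k ^ M i k) ^ L)"
    by (simp add: mon_def power_mult power_sum)
  also have "\<dots> = (\<Prod>k\<in>UNIV. \<Prod>i\<in>UNIV. h k ^ M i k) ^ L" by (simp add: prod_power_distrib)
  also have "(\<Prod>k\<in>UNIV. \<Prod>i\<in>UNIV. h k ^ M i k) = (\<Prod>i\<in>UNIV. \<Prod>k\<in>UNIV. h k ^ M i k)"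
    by (rule prod.swap)
  also have "\<dots> = (\<Prod>i\<in>UNIV. mon h (M i))" by (simp add: mon_def)
  also have "\<dots> = 1" using aut_mon(2)[OF inv h] by simp
  finally show ?thesis by simp
qed

lemma Pm_colsum: assumes inv: "invertible_poly M"
  shows "Pm (Mtr M) (\<lambda>k. (\<Sum>i\<in>UNIV. M i k) * L) = (\<lambda>_. 1)"
proof
  fix j
  have "(\<Sum>k\<in>UNIV. minv (Mtr M) j k * real ((\<Sum>i\<in>UNIV. M i k) * L))
      = real L * (\<Sum>k\<in>UNIV. \<Sum>i\<in>UNIV. real (M i k) * minv M k j)"
    by (simp add: minv_Mtr[OF inv] sum_distrib_left sum_distrib_right algebra_simps)
  also have "(\<Sum>k\<in>UNIV. \<Sum>i\<in>UNIV. real (M i k) * minv M k j) = (\<Sum>i\<in>UNIV. \<Sum>k\<in>UNIV. real (M i k) * minv M k j)"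
    by (rule sum.swap)
  also have "\<dots> = (\<Sum>i\<in>UNIV. (if i = j then 1 else 0))" using inv_facts(1)[OF inv] by simp
  also have "\<dots> = 1" by simp
  finally show "Pm (Mtr M) (\<lambda>k. (\<Sum>i\<in>UNIV. M i k) * L) j = 1"
    by (simp add: Pm_def cis_nat)
qed

lemma Pm_add: "Pm M (\<lambda>k. r k + r' k) = (\<lambda>j. Pm M r j * Pm M r' j)"
  by (simp add: Pm_def cis_mult sum.distrib distrib_left)

lemma Pm_zero: "Pm M (\<lambda>_. 0) = (\<lambda>_. 1)"
  by (simp add: Pm_def)

lemma dual_subgroup: assumes inv: "invertible_poly M" and TA: "T \<subseteq> Aut M"
  shows "is_subgroup (Pm (Mtr M) ` ann T)"
  unfolding is_subgroup_def
proof (intro conjI ballI)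
  show "(\<lambda>_. 1) \<in> Pm (Mtr M) ` ann T"
  proof -
    have "(\<lambda>_. 0) \<in> ann T" by (simp add: ann_def)
    then have "Pm (Mtr M) (\<lambda>_. 0) \<in> Pm (Mtr M) ` ann T" by (rule imageI)
    then show ?thesis by (simp add: Pm_zero)
  qed
next
  fix a b assume "a \<in> Pm (Mtr M) ` ann T" "b \<in> Pm (Mtr M) ` ann T"
  then obtain r r' where r: "r \<in> ann T" "a = Pm (Mtr M) r" and r': "r' \<in> ann T" "b = Pm (Mtr M) r'"
    by blast
  have "(\<lambda>k. r k + r' k) \<in> ann T" using r r' by (simp add: ann_def mon_add)
  then have "Pm (Mtr M) (\<lambda>k. r k + r' k) \<in> Pm (Mtr M) ` ann T" by (rule imageI)
  then show "(\<lambda>j. a j * b j) \<in> Pm (Mtr M) ` ann T" using r r' by (simp add: Pm_add)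
next
  fix a assume "a \<in> Pm (Mtr M) ` ann T"
  then obtain r where r: "r \<in> ann T" "a = Pm (Mtr M) r" by blast
  define L where "L = (\<Sum>k\<in>UNIV. r k)"
  define c where "c k = (\<Sum>i\<in>UNIV. M i k) * L" for k
  define r' where "r' k = c k - r k" for k
  have rc: "r k \<le> c k" for k
  proof -
    have "r k \<le> L" unfolding L_def by (rule member_le_sum) auto
    also have "\<dots> \<le> c k" unfolding c_def using col_nz[OF inv, of k] by simp
    finally show ?thesis .
  qed
  have sumc: "(\<lambda>k. r' k + r k) = c" using rc by (auto simp: r'_def fun_eq_iff)
  have "r' \<in> ann T"
    unfolding ann_def
  proof
    show "\<forall>h\<in>T. mon h r' = 1"
    proof
      fix h assume hT: "h \<in> T"
      have "mon h r' * mon h r = mon h c" using sumc mon_add[of h r' r] by simp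
      also have "\<dots> = 1" unfolding c_def using mon_colsum[OF inv] hT TA by blast
      finally show "mon h r' = 1" using r(1) hT by (simp add: ann_def)
    qed
  qed
  moreover have "Pm (Mtr M) r' = (\<lambda>j. inverse (a j))"
  proof
    fix j
    have "Pm (Mtr M) r' j * Pm (Mtr M) r j = Pm (Mtr M) (\<lambda>k. r' k + r k) j" by (simp add: Pm_add)
    also have "\<dots> = Pm (Mtr M) c j" by (simp only: sumc)
    also have "\<dots> = 1" unfolding c_def Pm_colsum[OF inv] by simp
    finally have "Pm (Mtr M) r' j * a j = 1" using r(2) by simp
    then have "a j * Pm (Mtr M) r' j = 1" by (simp add: mult.commute)
    then show "Pm (Mtr M) r' j = inverse (a j)" using inverse_unique by metis
  qed
  ultimately show "(\<lambda>j. inverse (a j)) \<in> Pm (Mtr M) ` ann T" by (metis imageI)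
qed

lemma sq_Pm: "sq (Pm M (\<lambda>_. 1)) = Pm M (\<lambda>_. 2)"
proof
  fix j
  have "sq (Pm M (\<lambda>_. 1)) j = cis (real 2 * (2*pi*(\<Sum>k\<in>UNIV. minv M j k * real (1::nat))))"
    unfolding sq_def Pm_def by (rule Complex.DeMoivre)
  also have "real 2 * (2*pi*(\<Sum>k\<in>UNIV. minv M j k * real (1::nat))) = 2*pi*(\<Sum>k\<in>UNIV. minv M j k * real (2::nat))"
    by (simp add: sum_distrib_left algebra_simps)
  finally show "sq (Pm M (\<lambda>_. 1)) j = Pm M (\<lambda>_. 2) j" by (simp add: Pm_def)
qed

lemma dt_sq: "dt (sq h) = (dt h)^2"
  by (simp add: dt_def sq_def prod_power_distrib)


lemma core_D:
  fixes M :: "'n::finite \<Rightarrow> 'n \<Rightarrow> nat"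
  assumes inv: "invertible_poly M" and hJ: "dt (Jgrad M) = -1"
    and G1: "is_subgroup G" and G2: "sq (Jgrad M) \<in> G" and G3: "G \<subseteq> SL M"
  shows "is_subgroup (star M G) \<and> sq (Jgrad (Mtr M)) \<in> star M G \<and> star M G \<subseteq> SL (Mtr M)
         \<and> star (Mtr M) (star M G) = G"
proof -
  define N where "N = Mtr M"
  define J where "J = Jgrad M"
  define T where "T = insert J G"
  have invN: "invertible_poly N" unfolding N_def by (rule Mtr_inv[OF inv])
  have MN: "Mtr N = M" unfolding N_def by simp
  have JP: "J = Pm M (\<lambda>_. 1)" unfolding J_def by (rule Jgrad_Pm[OF inv])
  have JA: "J \<in> Aut M" unfolding JP by (rule Pm_aut[OF inv])
  have GA: "G \<subseteq> Aut M" using G3 by (auto simp: SL_def)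
  have Gdt: "dt g = 1" if "g \<in> G" for g using G3 that by (auto simp: SL_def dt_def)
  have TA: "T \<subseteq> Aut M" unfolding T_def using JA GA by blast
  have se: "star M G = Pm N ` ann T" unfolding N_def T_def J_def by (rule star_eq[OF inv])
  have a: "is_subgroup (star M G)" unfolding se N_def by (rule dual_subgroup[OF inv TA])
  have JN: "Jgrad N = Pm N (\<lambda>_. 1)" by (rule Jgrad_Pm[OF invN])
  have b: "sq (Jgrad N) \<in> star M G"
  proof -
    have "(\<lambda>_. 2) \<in> ann T"
      unfolding ann_def T_def using hJ Gdt by (auto simp: mon_two J_def)
    then have "Pm N (\<lambda>_. 2) \<in> star M G" unfolding se by (rule imageI)
    then show ?thesis unfolding JN sq_Pm .
  qed
  have dtN: "dt (Pm N r) = mon J r" for r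
    using dt_Pm[OF invN, of r] by (simp add: MN J_def)
  have c: "star M G \<subseteq> SL N"
  proof
    fix x assume "x \<in> star M G"
    then obtain r where r: "r \<in> ann T" "x = Pm N r" unfolding se by blast
    have "x \<in> Aut N" using r(2) Pm_aut[OF invN] by simp
    moreover have "dt x = 1" using r dtN by (simp add: ann_def T_def)
    ultimately show "x \<in> SL N" by (simp add: SL_def dt_def)
  qed
  define K where "K = genby T"
  have KA: "K \<subseteq> Aut M" unfolding K_def by (rule genby_sub[OF aut_subgroup[OF inv] TA])
  have finK: "finite K" using aut_finite[OF inv] KA finite_subset by blast
  have subK: "is_subgroup K" unfolding K_def by (rule genby_subgroup)
  have nzK: "\<forall>h\<in>K. \<forall>j. h j \<noteq> 0" using KA aut_mon(1)[OF inv] by blast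
  have annK: "ann K = ann T" unfolding K_def by (rule ann_genby)
  have KG: "K \<inter> SL M \<subseteq> G"
  proof -
    define X where "X = G \<union> (\<lambda>g. \<lambda>j. J j * g j) ` G"
    have Jnz: "J j \<noteq> 0" for j using JA by (simp add: Aut_def)
    have one: "(\<lambda>_. 1) \<in> G" using G1 by (simp add: is_subgroup_def)
    have mulG: "(\<lambda>j. a j * b j) \<in> G" if "a \<in> G" "b \<in> G" for a b
      using G1 that by (simp add: is_subgroup_def)
    have invG: "(\<lambda>j. inverse (a j)) \<in> G" if "a \<in> G" for a
      using G1 that by (simp add: is_subgroup_def)
    have J2: "(\<lambda>j. J j * J j) \<in> G" using G2 by (simp add: sq_def J_def power2_eq_square)
    have subX: "is_subgroup X"
      unfolding is_subgroup_def
    proof (intro conjI ballI)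
      show "(\<lambda>_. 1) \<in> X" using one by (simp add: X_def)
    next
      fix a b assume a: "a \<in> X" and b: "b \<in> X"
      show "(\<lambda>j. a j * b j) \<in> X"
      proof (cases "a \<in> G")
        case True
        show ?thesis
        proof (cases "b \<in> G")
          case True with \<open>a \<in> G\<close> show ?thesis using mulG by (simp add: X_def)
        next
          case False then obtain g where g: "g \<in> G" "b = (\<lambda>j. J j * g j)" using b by (auto simp: X_def)
          have "(\<lambda>j. a j * b j) = (\<lambda>j. J j * (\<lambda>j. a j * g j) j)" using g by (auto simp: algebra_simps)
          then show ?thesis using mulG[OF \<open>a \<in> G\<close> g(1)] by (auto simp: X_def)
        qed
      next
        case False then obtain g where g: "g \<in> G" "a = (\<lambda>j. J j * g j)" using a by (auto simp: X_def)
        show ?thesis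
        proof (cases "b \<in> G")
          case True
          have "(\<lambda>j. a j * b j) = (\<lambda>j. J j * (\<lambda>j. g j * b j) j)" using g by (auto simp: algebra_simps)
          then show ?thesis using mulG[OF g(1) True] by (auto simp: X_def)
        next
          case False then obtain g' where g': "g' \<in> G" "b = (\<lambda>j. J j * g' j)" using b by (auto simp: X_def)
          have "(\<lambda>j. a j * b j) = (\<lambda>j. (\<lambda>j. J j * J j) j * (\<lambda>j. g j * g' j) j)"
            using g g' by (auto simp: algebra_simps)
          then show ?thesis using mulG[OF J2 mulG[OF g(1) g'(1)]] by (auto simp: X_def)
        qed
      qed
    next
      fix a assume a: "a \<in> X"
      show "(\<lambda>j. inverse (a j)) \<in> X"
      proof (cases "a \<in> G")
        case True then show ?thesis using invG by (simp add: X_def)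
      next
        case False then obtain g where g: "g \<in> G" "a = (\<lambda>j. J j * g j)" using a by (auto simp: X_def)
        have "(\<lambda>j. inverse (a j)) = (\<lambda>j. J j * (\<lambda>j. (\<lambda>j. inverse (J j * J j)) j * (\<lambda>j. inverse (g j)) j) j)"
          using g Jnz by (auto simp: field_simps fun_eq_iff)
        then show ?thesis using mulG[OF invG[OF J2] invG[OF g(1)]] by (auto simp: X_def)
      qed
    qed
    have "J \<in> X" using one by (auto simp: X_def intro!: image_eqI[of _ _ "\<lambda>_. 1"])
    then have "T \<subseteq> X" unfolding T_def X_def by blast
    then have KX: "K \<subseteq> X" unfolding K_def by (rule genby_sub[OF subX])
    show ?thesis
    proof
      fix x assume x: "x \<in> K \<inter> SL M"
      show "x \<in> G"
      proof (rule ccontr)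
        assume "x \<notin> G"
        then obtain g where g: "g \<in> G" "x = (\<lambda>j. J j * g j)" using x KX by (auto simp: X_def)
        have "dt x = dt J * dt g" using g(2) dt_vmul by simp
        then have "dt x = -1" using hJ Gdt[OF g(1)] by (simp add: J_def)
        moreover have "dt x = 1" using x by (simp add: SL_def dt_def)
        ultimately show False by simp
      qed
    qed
  qed
  have seN: "star N (star M G) = Pm M ` ann (insert (Jgrad N) (star M G))"
    using star_eq[OF invN, of "star M G"] by (simp add: MN)
  have dtM: "dt (Pm M s) = mon (Jgrad N) s" for s unfolding N_def by (rule dt_Pm[OF inv])
  have pair: "mon (Pm M s) r = mon (Pm N r) s" for s r unfolding N_def by (rule pairing[OF inv])
  have d: "star N (star M G) = G"
  proof
    show "star N (star M G) \<subseteq> G"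
    proof
      fix y assume "y \<in> star N (star M G)"
      then obtain s where s: "s \<in> ann (insert (Jgrad N) (star M G))" "y = Pm M s" unfolding seN by blast
      have yA: "y \<in> Aut M" using s(2) Pm_aut[OF inv] by simp
      have "dt y = 1" using s dtM by (simp add: ann_def)
      then have ySL: "y \<in> SL M" using yA by (simp add: SL_def dt_def)
      have hyp: "\<forall>r. (\<forall>h\<in>K. mon h r = 1) \<longrightarrow> mon y r = 1"
      proof (intro allI impI)
        fix r assume "\<forall>h\<in>K. mon h r = 1"
        then have "r \<in> ann K" by (simp add: ann_def)
        then have "r \<in> ann T" using annK by simp
        then have "Pm N r \<in> star M G" unfolding se by (rule imageI)
        then have "mon (Pm N r) s = 1" using s(1) by (simp add: ann_def)
        then show "mon y r = 1" using s(2) pair by simp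
      qed
      have "y \<in> K" by (rule separation[OF finK subK nzK aut_mon(1)[OF inv yA] hyp])
      then show "y \<in> G" using KG ySL by blast
    qed
  next
    show "G \<subseteq> star N (star M G)"
    proof
      fix g assume gG: "g \<in> G"
      then have "g \<in> Aut M" using GA by blast
      then obtain s where s: "g = Pm M s" using aut_char[OF inv] by blast
      have "s \<in> ann (insert (Jgrad N) (star M G))"
        unfolding ann_def
      proof (intro CollectI ballI)
        fix h assume "h \<in> insert (Jgrad N) (star M G)"
        then show "mon h s = 1"
        proof
          assume "h = Jgrad N"
          then show ?thesis using dtM[of s] Gdt[OF gG] s by simp
        next
          assume "h \<in> star M G"
          then obtain r where r: "r \<in> ann T" "h = Pm N r" unfolding se by blast
          have "mon g r = 1" using r(1) gG by (simp add: ann_def T_def)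
          then show ?thesis using pair[of s r] s r(2) by simp
        qed
      qed
      then show "g \<in> star N (star M G)" unfolding seN s by (rule imageI)
    qed
  qed
  show ?thesis using a b c d unfolding N_def by blast
qed

lemma core_E:
  fixes M :: "'n::finite \<Rightarrow> 'n \<Rightarrow> nat"
  assumes inv: "invertible_poly M"
  shows "star M (genby {sq (Jgrad M)}) = SL (Mtr M)"
proof -
  define N where "N = Mtr M"
  define J where "J = Jgrad M"
  have invN: "invertible_poly N" unfolding N_def by (rule Mtr_inv[OF inv])
  have MN: "Mtr N = M" unfolding N_def by simp
  have dtN: "dt (Pm N r) = mon J r" for r
    using dt_Pm[OF invN, of r] by (simp add: MN J_def)
  have an: "ann (insert J (genby {sq J})) = {r. mon J r = 1}"
  proof -
    have "ann (insert J (genby {sq J})) = ann {J} \<inter> ann (genby {sq J})" by (auto simp: ann_def)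
    also have "\<dots> = ann {J} \<inter> ann {sq J}" by (simp add: ann_genby)
    also have "\<dots> = {r. mon J r = 1}" by (auto simp: ann_def mon_sq)
    finally show ?thesis .
  qed
  have "star M (genby {sq J}) = Pm N ` {r. mon J r = 1}"
    using star_eq[OF inv, of "genby {sq J}"] an by (simp add: N_def J_def)
  also have "\<dots> = SL N"
  proof
    show "Pm N ` {r. mon J r = 1} \<subseteq> SL N"
    proof
      fix x assume "x \<in> Pm N ` {r. mon J r = 1}"
      then obtain r where r: "mon J r = 1" "x = Pm N r" by blast
      then show "x \<in> SL N" using Pm_aut[OF invN] dtN by (simp add: SL_def dt_def)
    qed
  next
    show "SL N \<subseteq> Pm N ` {r. mon J r = 1}"
    proof
      fix x assume x: "x \<in> SL N"
      then obtain r where r: "x = Pm N r" using aut_char[OF invN] by (auto simp: SL_def)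
      have "mon J r = 1" using x r dtN[of r] by (simp add: SL_def dt_def)
      then show "x \<in> Pm N ` {r. mon J r = 1}" using r by blast
    qed
  qed
  finally show ?thesis by (simp add: N_def J_def)
qed

lemma sum_qweight_half:
  fixes M :: "'n::finite \<Rightarrow> 'n \<Rightarrow> nat"
  assumes inv: "invertible_poly M" and qh: "quasi_hom M w d" and cy: "2 * (\<Sum>j\<in>UNIV. w j) = d"
  shows "(\<Sum>j\<in>UNIV. qweight M j) = 1/2"
proof -
  have d0: "d > 0" using qh by (simp add: quasi_hom_def)
  have eq: "(\<Sum>j\<in>UNIV. real (M i j) * (real (w j) / real d)) = 1" for i
  proof -
    have "(\<Sum>j\<in>UNIV. M i j * w j) = d" using qh by (simp add: quasi_hom_def)
    then have "real (\<Sum>j\<in>UNIV. M i j * w j) = real d" by simp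
    then have "(\<Sum>j\<in>UNIV. real (M i j) * real (w j)) = real d" by simp
    then show ?thesis using d0 by (simp add: sum_divide_distrib[symmetric] times_divide_eq_right)
  qed
  have "real (w j) / real d = (\<Sum>i\<in>UNIV. minv M j i * 1)" for j
    by (rule solve[OF inv]) (use eq in simp)
  then have "qweight M j = real (w j) / real d" for j by (simp add: qweight_eq[OF inv])
  then have "(\<Sum>j\<in>UNIV. qweight M j) = (\<Sum>j\<in>UNIV. real (w j)) / real d"
    by (simp add: sum_divide_distrib)
  also have "(\<Sum>j\<in>UNIV. real (w j)) = real d / 2"
  proof -
    have "real (2 * (\<Sum>j\<in>UNIV. w j)) = real d" using cy by simp
    then have "2 * (\<Sum>j\<in>UNIV. real (w j)) = real d" by simp
    then show ?thesis by simp
  qed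
  finally show ?thesis using d0 by simp
qed

theorem proposition4p3:
  fixes M :: "'n::finite \<Rightarrow> 'n \<Rightarrow> nat" and w :: "'n \<Rightarrow> nat" and d :: nat
  assumes inv: "invertible_poly M"
    and qh: "quasi_hom M w d"
    and nd: "nondegenerate M"
    and cy: "2 * (\<Sum>j\<in>UNIV. w j) = d"
  shows "(\<forall>G. is_subgroup G \<and> sq (Jgrad M) \<in> G \<and> G \<subseteq> SL M \<longrightarrow>
            is_subgroup (star M G) \<and> sq (Jgrad (Mtr M)) \<in> star M G \<and> star M G \<subseteq> SL (Mtr M)
            \<and> star (Mtr M) (star M G) = G)
       \<and> star M (genby {sq (Jgrad M)}) = SL (Mtr M)
       \<and> star M (SL M) = genby {sq (Jgrad (Mtr M))}
       \<and> (\<forall>H1 H2. is_subgroup H1 \<and> is_subgroup H2 \<and> H1 \<subseteq> H2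
            \<and> sq (Jgrad M) \<in> H1 \<and> H1 \<subseteq> SL M \<and> sq (Jgrad M) \<in> H2 \<and> H2 \<subseteq> SL M
            \<longrightarrow> star M H2 \<subseteq> star M H1)"
proof -
  define N where "N = Mtr M"
  have invN: "invertible_poly N" unfolding N_def by (rule Mtr_inv[OF inv])
  have MN: "Mtr N = M" unfolding N_def by simp
  have half: "(\<Sum>j\<in>UNIV. qweight M j) = 1/2" by (rule sum_qweight_half[OF inv qh cy])
  have hJ: "dt (Jgrad M) = -1" unfolding dt_Jgrad half by simp
  have halfN: "(\<Sum>j\<in>UNIV. qweight N j) = 1/2" using half qweight_Mtr_sum[OF inv] by (simp add: N_def)
  have hJN: "dt (Jgrad N) = -1" unfolding dt_Jgrad halfN by simp
  have P1: "\<forall>G. is_subgroup G \<and> sq (Jgrad M) \<in> G \<and> G \<subseteq> SL M \<longrightarrow>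
            is_subgroup (star M G) \<and> sq (Jgrad (Mtr M)) \<in> star M G \<and> star M G \<subseteq> SL (Mtr M)
            \<and> star (Mtr M) (star M G) = G"
    using core_D[OF inv hJ] by blast
  have P2: "star M (genby {sq (Jgrad M)}) = SL (Mtr M)" by (rule core_E[OF inv])
  have P3: "star M (SL M) = genby {sq (Jgrad N)}"
  proof -
    define G' where "G' = genby {sq (Jgrad N)}"
    have JNP: "Jgrad N = Pm N (\<lambda>_. 1)" by (rule Jgrad_Pm[OF invN])
    have sqA: "sq (Jgrad N) \<in> Aut N" unfolding JNP sq_Pm by (rule Pm_aut[OF invN])
    have "dt (sq (Jgrad N)) = 1" using hJN by (simp add: dt_sq)
    then have sqSL: "sq (Jgrad N) \<in> SL N" using sqA by (simp add: SL_def dt_def)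
    have G'1: "is_subgroup G'" unfolding G'_def by (rule genby_subgroup)
    have G'2: "sq (Jgrad N) \<in> G'" unfolding G'_def using genby_incl by blast
    have G'3: "G' \<subseteq> SL N" unfolding G'_def using sqSL by (intro genby_sub[OF SL_subgroup[OF invN]]) auto
    have "star (Mtr N) (star N G') = G'" using core_D[OF invN hJN G'1 G'2 G'3] by blast
    moreover have "star N G' = SL M" unfolding G'_def using core_E[OF invN] by (simp add: MN)
    ultimately show ?thesis using MN by (simp add: G'_def)
  qed
  have P4: "\<forall>H1 H2. is_subgroup H1 \<and> is_subgroup H2 \<and> H1 \<subseteq> H2
            \<and> sq (Jgrad M) \<in> H1 \<and> H1 \<subseteq> SL M \<and> sq (Jgrad M) \<in> H2 \<and> H2 \<subseteq> SL M
            \<longrightarrow> star M H2 \<subseteq> star M H1"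
  proof (intro allI impI)
    fix H1 H2 :: "('n \<Rightarrow> complex) set"
    assume "is_subgroup H1 \<and> is_subgroup H2 \<and> H1 \<subseteq> H2
            \<and> sq (Jgrad M) \<in> H1 \<and> H1 \<subseteq> SL M \<and> sq (Jgrad M) \<in> H2 \<and> H2 \<subseteq> SL M"
    then have "H1 \<subseteq> H2" by blast
    then have "ann (insert (Jgrad M) H2) \<subseteq> ann (insert (Jgrad M) H1)" by (auto simp: ann_def)
    then show "star M H2 \<subseteq> star M H1" unfolding star_eq[OF inv] by blast
  qed
  show ?thesis using P1 P2 P3 P4 by (simp add: N_def)
qed


end
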